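(* Let $-\pi\le\mu_1,\mu_2<\pi$ and $0\le\rho_1,\rho_2<1$, and consider the probability density on $[-\pi,\pi)$ $$f(\theta)=C\left[\{1+\rho_1^2-2\rho_1\cos(\theta-\mu_1)\}\{1+\rho_2^2-2\rho_2\cos(\theta-\mu_2)\}\right]^{-1},$$ with $C>0$ the normalizing constant. Then $f$ is symmetric (about some point of the circle) if and only if $\rho_1=\rho_2$, or $\rho_j=0$ for some $j\in\{1,2\}$, or $\mu_1=\mu_2+(j-1)\pi$ for some $j\in\{1,2\}$ (angles taken modulo $2\pi$). *)

theory Defs
  imports "HOL-Analysis.Analysis"
begin

text \<open>Density of the product of two wrapped-Cauchy-type kernels (as a 2pi-periodic
  function on the real line; its restriction to [-pi,pi) is the density of the paper).\<close>
definition kernel_prod :: "real \<Rightarrow> real \<Rightarrow> real \<Rightarrow> real \<Rightarrow> real \<Rightarrow> real \<Rightarrow> real" where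
  "kernel_prod C \<mu>1 \<mu>2 \<rho>1 \<rho>2 \<theta> =
     C / ((1 + \<rho>1\<^sup>2 - 2 * \<rho>1 * cos (\<theta> - \<mu>1)) * (1 + \<rho>2\<^sup>2 - 2 * \<rho>2 * cos (\<theta> - \<mu>2)))"

definition circ_symmetric :: "(real \<Rightarrow> real) \<Rightarrow> bool" where
  "circ_symmetric f \<longleftrightarrow> (\<exists>\<nu>. \<forall>\<theta>. f (\<nu> + \<theta>) = f (\<nu> - \<theta>))"

end

theory Submission
  imports Defs
begin

lemma A_pos:
  fixes \<rho> x :: real
  assumes "0 \<le> \<rho>" "\<rho> < 1"
  shows "1 + \<rho>\<^sup>2 - 2 * \<rho> * cos x > 0"
proof -
  have "\<rho> * cos x \<le> \<rho>" using mult_left_mono[OF cos_le_one assms(1)] by simp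
  hence "1 + \<rho>\<^sup>2 - 2 * \<rho> * cos x \<ge> (1 - \<rho>)\<^sup>2" by (simp add: power2_eq_square algebra_simps)
  moreover have "(1 - \<rho>)\<^sup>2 > 0" using assms by simp
  ultimately show ?thesis by linarith
qed

lemma div_eq_iff:
  fixes C a b :: real
  assumes "C > 0" "a > 0" "b > 0"
  shows "C / a = C / b \<longleftrightarrow> a = b"
  using assms by (auto simp: field_simps)

lemma diff_id:
  fixes r1 r2 a1 a2 t :: real
  shows "(1 + r1\<^sup>2 - 2 * r1 * cos (t - a1)) * (1 + r2\<^sup>2 - 2 * r2 * cos (t - a2))
       - (1 + r1\<^sup>2 - 2 * r1 * cos (- t - a1)) * (1 + r2\<^sup>2 - 2 * r2 * cos (- t - a2))
     = -4 * sin t * (r1 * (1 + r2\<^sup>2) * sin a1 + r2 * (1 + r1\<^sup>2) * sin a2)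
       + 8 * r1 * r2 * sin t * cos t * sin (a1 + a2)"
  by (simp add: cos_diff sin_add cos_add algebra_simps power2_eq_square)

lemma sym_iff:
  assumes "C > 0" "0 \<le> \<rho>1" "\<rho>1 < 1" "0 \<le> \<rho>2" "\<rho>2 < 1"
  shows "kernel_prod C \<mu>1 \<mu>2 \<rho>1 \<rho>2 x = kernel_prod C \<mu>1 \<mu>2 \<rho>1 \<rho>2 y \<longleftrightarrow>
    (1 + \<rho>1\<^sup>2 - 2 * \<rho>1 * cos (x - \<mu>1)) * (1 + \<rho>2\<^sup>2 - 2 * \<rho>2 * cos (x - \<mu>2)) =
    (1 + \<rho>1\<^sup>2 - 2 * \<rho>1 * cos (y - \<mu>1)) * (1 + \<rho>2\<^sup>2 - 2 * \<rho>2 * cos (y - \<mu>2))"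
  unfolding kernel_prod_def
  by (rule div_eq_iff) (use assms A_pos in auto)

theorem theorem3:
  fixes \<mu>1 \<mu>2 \<rho>1 \<rho>2 C :: real
  assumes "-pi \<le> \<mu>1" "\<mu>1 < pi" "-pi \<le> \<mu>2" "\<mu>2 < pi"
    and "0 \<le> \<rho>1" "\<rho>1 < 1" "0 \<le> \<rho>2" "\<rho>2 < 1"
    and "C > 0"
    and "(kernel_prod C \<mu>1 \<mu>2 \<rho>1 \<rho>2 has_integral 1) {-pi..pi}"
  shows "circ_symmetric (kernel_prod C \<mu>1 \<mu>2 \<rho>1 \<rho>2) \<longleftrightarrow>
           (\<rho>1 = \<rho>2 \<or> (\<exists>j\<in>{1::nat,2}. (if j = 1 then \<rho>1 else \<rho>2) = 0)
            \<or> (\<exists>j\<in>{1::nat,2}. \<exists>k::int. \<mu>1 = \<mu>2 + (real j - 1) * pi + 2 * pi * real_of_int k))"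
proof
  note S = sym_iff[OF assms(9,5,6,7,8), of \<mu>1 \<mu>2]
  assume "circ_symmetric (kernel_prod C \<mu>1 \<mu>2 \<rho>1 \<rho>2)"
  then obtain \<nu> where nu: "\<And>\<theta>. kernel_prod C \<mu>1 \<mu>2 \<rho>1 \<rho>2 (\<nu> + \<theta>) = kernel_prod C \<mu>1 \<mu>2 \<rho>1 \<rho>2 (\<nu> - \<theta>)"
    unfolding circ_symmetric_def by blast
  define a1 where "a1 = \<mu>1 - \<nu>"
  define a2 where "a2 = \<mu>2 - \<nu>"
  define K where "K = \<rho>1 * (1 + \<rho>2\<^sup>2) * sin a1 + \<rho>2 * (1 + \<rho>1\<^sup>2) * sin a2"
  have D: "-4 * sin t * K + 8 * \<rho>1 * \<rho>2 * sin t * cos t * sin (a1 + a2) = 0" for t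
  proof -
    have e: "\<nu> + t - \<mu>1 = t - a1" "\<nu> + t - \<mu>2 = t - a2" "\<nu> - t - \<mu>1 = - t - a1" "\<nu> - t - \<mu>2 = - t - a2"
      by (auto simp: a1_def a2_def)
    have "(1 + \<rho>1\<^sup>2 - 2 * \<rho>1 * cos (t - a1)) * (1 + \<rho>2\<^sup>2 - 2 * \<rho>2 * cos (t - a2))
       = (1 + \<rho>1\<^sup>2 - 2 * \<rho>1 * cos (- t - a1)) * (1 + \<rho>2\<^sup>2 - 2 * \<rho>2 * cos (- t - a2))"
      using nu[of t] S[of "\<nu> + t" "\<nu> - t"] e by simp
    thus ?thesis using diff_id[of \<rho>1 t a1 \<rho>2 a2] unfolding K_def by linarith
  qed
  have K0: "K = 0" using D[of "pi/2"] by simp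
  have "8 * \<rho>1 * \<rho>2 * (sqrt 2 / 2) * (sqrt 2 / 2) * sin (a1 + a2) = 0"
    using D[of "pi/4"] K0 by (simp add: sin_45 cos_45)
  hence P: "\<rho>1 * \<rho>2 * sin (a1 + a2) = 0" by (simp add: algebra_simps)
  show "\<rho>1 = \<rho>2 \<or> (\<exists>j\<in>{1::nat,2}. (if j = 1 then \<rho>1 else \<rho>2) = 0)
            \<or> (\<exists>j\<in>{1::nat,2}. \<exists>k::int. \<mu>1 = \<mu>2 + (real j - 1) * pi + 2 * pi * real_of_int k)"
  proof (cases "\<rho>1 = 0 \<or> \<rho>2 = 0")
    case True
    then show ?thesis by auto
  next
    case False
    with P have s0: "sin (a1 + a2) = 0" by simp
    define s where "s = a1 + a2"
    have "(cos s)\<^sup>2 = 1" using s0 sin_cos_squared_add[of s] unfolding s_def by simp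
    hence cs: "cos s = 1 \<or> cos s = -1" by (simp add: power2_eq_1_iff)
    have "sin (s - a1) = sin s * cos a1 - cos s * sin a1" by (rule sin_diff)
    moreover have "s - a1 = a2" by (simp add: s_def)
    ultimately have sa2: "sin a2 = - cos s * sin a1" using s0 unfolding s_def by simp
    have Kf: "sin a1 * (\<rho>1 * (1 + \<rho>2\<^sup>2) - cos s * \<rho>2 * (1 + \<rho>1\<^sup>2)) = 0"
      using K0 unfolding K_def sa2 by (simp add: algebra_simps)
    show ?thesis
    proof (cases "sin a1 = 0")
      case True
      hence "sin a2 = 0" using sa2 by simp
      then obtain n2 :: int where n2: "a2 = of_int n2 * pi" by (auto simp: sin_zero_iff_int2)
      from True obtain n1 :: int where n1: "a1 = of_int n1 * pi" by (auto simp: sin_zero_iff_int2)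
      have md: "\<mu>1 = \<mu>2 + of_int (n1 - n2) * pi" using n1 n2 a1_def a2_def by (simp add: algebra_simps)
      show ?thesis
      proof (cases "even (n1 - n2)")
        case True
        then obtain k where "n1 - n2 = 2 * k" by blast
        hence "\<mu>1 = \<mu>2 + (real 1 - 1) * pi + 2 * pi * real_of_int k" using md by simp
        thus ?thesis by blast
      next
        case False
        then obtain k where "n1 - n2 = 2 * k + 1" using oddE by blast
        hence "\<mu>1 = \<mu>2 + (real 2 - 1) * pi + 2 * pi * real_of_int k" using md by (simp add: algebra_simps)
        thus ?thesis by blast
      qed
    next
      case False
      hence E: "\<rho>1 * (1 + \<rho>2\<^sup>2) = cos s * \<rho>2 * (1 + \<rho>1\<^sup>2)" using Kf by simp
      have p1: "\<rho>1 > 0" "\<rho>2 > 0" using \<open>\<not> (\<rho>1 = 0 \<or> \<rho>2 = 0)\<close> assms by auto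
      have "cos s = 1"
      proof (rule ccontr)
        assume "cos s \<noteq> 1"
        hence "cos s = -1" using cs by simp
        hence "\<rho>1 * (1 + \<rho>2\<^sup>2) = - (\<rho>2 * (1 + \<rho>1\<^sup>2))" using E by simp
        moreover have "\<rho>1 * (1 + \<rho>2\<^sup>2) > 0" "\<rho>2 * (1 + \<rho>1\<^sup>2) > 0" using p1 by (simp_all add: add_pos_nonneg)
        ultimately show False by linarith
      qed
      hence "(\<rho>1 - \<rho>2) * (1 - \<rho>1 * \<rho>2) = 0" using E by (simp add: algebra_simps power2_eq_square)
      moreover have "\<rho>1 * \<rho>2 < 1"
      proof -
        have "\<rho>1 * \<rho>2 \<le> \<rho>1" using mult_left_mono[of \<rho>2 1 \<rho>1] assms by simp
        thus ?thesis using assms by linarith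
      qed
      ultimately show ?thesis by simp
    qed
  qed
next
  note S = sym_iff[OF assms(9,5,6,7,8), of \<mu>1 \<mu>2]
  assume H: "\<rho>1 = \<rho>2 \<or> (\<exists>j\<in>{1::nat,2}. (if j = 1 then \<rho>1 else \<rho>2) = 0)
            \<or> (\<exists>j\<in>{1::nat,2}. \<exists>k::int. \<mu>1 = \<mu>2 + (real j - 1) * pi + 2 * pi * real_of_int k)"
  show "circ_symmetric (kernel_prod C \<mu>1 \<mu>2 \<rho>1 \<rho>2)"
    unfolding circ_symmetric_def
  proof -
    consider (eq) "\<rho>1 = \<rho>2" | (z1) "\<rho>1 = 0" | (z2) "\<rho>2 = 0"
      | (mu) m :: int where "\<mu>1 = \<mu>2 + of_int m * pi"
    proof -
      assume a: "\<rho>1 = \<rho>2 \<Longrightarrow> thesis" "\<rho>1 = 0 \<Longrightarrow> thesis" "\<rho>2 = 0 \<Longrightarrow> thesis"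
        "\<And>m::int. \<mu>1 = \<mu>2 + of_int m * pi \<Longrightarrow> thesis"
      show thesis
      proof (cases "\<rho>1 = \<rho>2 \<or> \<rho>1 = 0 \<or> \<rho>2 = 0")
        case True thus ?thesis using a by blast
      next
        case False
        have "\<not> (\<exists>j\<in>{1::nat,2}. (if j = 1 then \<rho>1 else \<rho>2) = 0)" using False by auto
        with H False have "\<exists>j\<in>{1::nat,2}. \<exists>k::int. \<mu>1 = \<mu>2 + (real j - 1) * pi + 2 * pi * real_of_int k"
          by blast
        then obtain j k where j: "j \<in> {1::nat,2}" and k: "\<mu>1 = \<mu>2 + (real j - 1) * pi + 2 * pi * real_of_int k"
          by blast
        have "\<mu>1 = \<mu>2 + of_int (int j - 1 + 2 * k) * pi" using k by (simp add: algebra_simps)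
        thus ?thesis using a(4) by blast
      qed
    qed
    then show "\<exists>\<nu>. \<forall>\<theta>. kernel_prod C \<mu>1 \<mu>2 \<rho>1 \<rho>2 (\<nu> + \<theta>) = kernel_prod C \<mu>1 \<mu>2 \<rho>1 \<rho>2 (\<nu> - \<theta>)"
    proof cases
      case eq
      define e where "e = (\<mu>1 - \<mu>2) / 2"
      have "kernel_prod C \<mu>1 \<mu>2 \<rho>1 \<rho>2 ((\<mu>1 + \<mu>2)/2 + t) = kernel_prod C \<mu>1 \<mu>2 \<rho>1 \<rho>2 ((\<mu>1 + \<mu>2)/2 - t)" for t
      proof -
        have e: "(\<mu>1 + \<mu>2)/2 + t - \<mu>1 = t - e" "(\<mu>1 + \<mu>2)/2 + t - \<mu>2 = t + e"
          "(\<mu>1 + \<mu>2)/2 - t - \<mu>1 = -(t + e)" "(\<mu>1 + \<mu>2)/2 - t - \<mu>2 = -(t - e)"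
          by (auto simp: e_def field_simps)
        show ?thesis unfolding S e cos_minus using eq by simp
      qed
      thus ?thesis by blast
    next
      case z1
      have "kernel_prod C \<mu>1 \<mu>2 \<rho>1 \<rho>2 (\<mu>2 + t) = kernel_prod C \<mu>1 \<mu>2 \<rho>1 \<rho>2 (\<mu>2 - t)" for t
        unfolding S using z1 by simp
      thus ?thesis by blast
    next
      case z2
      have "kernel_prod C \<mu>1 \<mu>2 \<rho>1 \<rho>2 (\<mu>1 + t) = kernel_prod C \<mu>1 \<mu>2 \<rho>1 \<rho>2 (\<mu>1 - t)" for t
        unfolding S using z2 by simp
      thus ?thesis by blast
    next
      case (mu m)
      define d where "d = of_int m * pi"
      have sd: "sin d = 0" unfolding d_def by (auto simp: sin_zero_iff_int2)
      have "kernel_prod C \<mu>1 \<mu>2 \<rho>1 \<rho>2 (\<mu>2 + t) = kernel_prod C \<mu>1 \<mu>2 \<rho>1 \<rho>2 (\<mu>2 - t)" for t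
      proof -
        have e: "\<mu>2 + t - \<mu>1 = t - d" "\<mu>2 - t - \<mu>1 = -(t + d)" using mu by (auto simp: d_def)
        have c: "cos (t - d) = cos (t + d)" using sd by (simp add: cos_diff cos_add)
        show ?thesis unfolding S e cos_minus c by simp
      qed
      thus ?thesis by blast
    qed
  qed
qed

end
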